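(* Let $a,b,c,y,\alpha$ be real numbers with $0<c<y<1$ and $y<b<a$. Then \[ \int_{c}^{y}\frac{1-\alpha u}{1-u^2}\,\frac{\mathrm{d}u}{\sqrt{(a-u)(b-u)(u-c)}} =\frac{\sqrt{y-c}}{(1-c^2)\sqrt{(a-c)(b-c)}}\left(2(1-c\alpha)\,X-\frac23\,\alpha\,(y-c)\,Y\right), \] where \[ X=\mathrm{F}_{D}^{(4)}\left(\tfrac12;1,1,\tfrac12,\tfrac12;\tfrac32;\ \frac{y-c}{1-c},\,-\frac{y-c}{1+c},\,-\frac{y-c}{c-a},\,-\frac{y-c}{c-b}\right), \] \[ Y=\mathrm{F}_{D}^{(4)}\left(\tfrac32;1,1,\tfrac12,\tfrac12;\tfrac52;\ \frac{y-c}{1-c},\,-\frac{y-c}{1+c},\,-\frac{y-c}{c-a},\,-\frac{y-c}{c-b}\right). \]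
   Context: For $n\ge1$, the Lauricella hypergeometric function of $n$ variables is \[ \mathrm{F}_{D}^{(n)}(a;b_1,\dots,b_n;c;x_1,\dots,x_n)=\sum_{m_1,\dots,m_n\ge0}\frac{(a)_{m_1+\cdots+m_n}(b_1)_{m_1}\cdots(b_n)_{m_n}}{(c)_{m_1+\cdots+m_n}\,m_1!\cdots m_n!}\,x_1^{m_1}\cdots x_n^{m_n},\qquad |x_i|<1, \] where $(\lambda)_m=\Gamma(\lambda+m)/\Gamma(\lambda)$ is the Pochhammer symbol; for $\operatorname{Re}c>\operatorname{Re}a>0$ it equals $\frac{\Gamma(c)}{\Gamma(a)\Gamma(c-a)}\int_0^1 u^{a-1}(1-u)^{c-a-1}\prod_{i=1}^n(1-x_iu)^{-b_i}\,\mathrm{d}u$, which gives its analytic continuation to $x_i\notin[1,\infty)$. *)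

theory Defs
  imports "HOL-Analysis.Analysis"
begin

text \<open>Lauricella hypergeometric function F_D of n variables, defined by its
  multiple power series (summed over all multi-indices m_0,...,m_{n-1} in nat,
  encoded as functions nat => nat vanishing from index n on).\<close>

definition lauricella_FD ::
  "nat \<Rightarrow> real \<Rightarrow> (nat \<Rightarrow> real) \<Rightarrow> real \<Rightarrow> (nat \<Rightarrow> real) \<Rightarrow> real" where
  "lauricella_FD n a b c x =
     (\<Sum>\<^sub>\<infinity> m \<in> {m :: nat \<Rightarrow> nat. \<forall>i\<ge>n. m i = 0}.
        pochhammer a (\<Sum>i<n. m i) * (\<Prod>i<n. pochhammer (b i) (m i))
        / (pochhammer c (\<Sum>i<n. m i) * (\<Prod>i<n. fact (m i)))
        * (\<Prod>i<n. x i ^ m i))"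

end

theory Submission
  imports Defs
begin
definition ser :: "real \<Rightarrow> real \<Rightarrow> nat \<Rightarrow> real" where
  "ser b x n = pochhammer b n / fact n * x ^ n"

lemma ser_sums:
  assumes "\<bar>x\<bar> < 1"
  shows "ser b x sums ((1 - x) powr (-b))"
proof -
  have "(\<lambda>n. ((-b) gchoose n) * (-x)^n) sums (1 + (-x)) powr (-b)"
    using gen_binomial_real[of "-x" "-b"] assms by simp
  moreover have "((-b) gchoose n) * (-x)^n = ser b x n" for n
    unfolding ser_def gbinomial_pochhammer
    by (simp add: power_mult_distrib[symmetric] flip: power_minus)
  ultimately show ?thesis by simp
qed

lemma ser_has_sum:
  assumes "\<bar>x\<bar> < 1" "b > 0"
  shows "(ser b x has_sum ((1 - x) powr (-b))) UNIV"
    and "(\<lambda>n. norm (ser b x n)) summable_on UNIV"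
proof -
  have nn: "norm (ser b x n) = ser b \<bar>x\<bar> n" for n
    unfolding ser_def using assms(2)
    by (simp add: abs_mult power_abs pochhammer_nonneg)
  have "ser b \<bar>x\<bar> summable_on UNIV"
    apply (rule summable_nonneg_imp_summable_on)
    using ser_sums[of "\<bar>x\<bar>" b] assms apply (simp add: sums_summable)
    unfolding ser_def using assms(2) by (simp add: pochhammer_nonneg)
  then show abs: "(\<lambda>n. norm (ser b x n)) summable_on UNIV" by (simp only: nn)
  then have "ser b x summable_on UNIV" by (rule abs_summable_summable)
  then have "(ser b x has_sum (infsum (ser b x) UNIV)) UNIV" by simp
  moreover have "ser b x sums (infsum (ser b x) UNIV)"
    using calculation by (rule has_sum_imp_sums)
  ultimately show "(ser b x has_sum ((1 - x) powr (-b))) UNIV"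
    using ser_sums[OF assms(1), of b] sums_unique2 by metis
qed

lemma bij_restrict_idx:
  "bij_betw (\<lambda>m. restrict m {..<n}) {m::nat\<Rightarrow>nat. \<forall>i\<ge>n. m i = 0} (PiE {..<n} (\<lambda>_. UNIV))"
proof (rule bij_betwI')
  fix x y assume "x \<in> {m::nat\<Rightarrow>nat. \<forall>i\<ge>n. m i = 0}" "y \<in> {m::nat\<Rightarrow>nat. \<forall>i\<ge>n. m i = 0}"
  then show "(restrict x {..<n} = restrict y {..<n}) = (x = y)"
    by (auto simp: fun_eq_iff restrict_def) (metis not_le)
next
  fix x assume "x \<in> {m::nat\<Rightarrow>nat. \<forall>i\<ge>n. m i = 0}"
  then show "restrict x {..<n} \<in> PiE {..<n} (\<lambda>_. UNIV)" by auto
next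
  fix p :: "nat \<Rightarrow> nat" assume p: "p \<in> PiE {..<n} (\<lambda>_. UNIV)"
  show "\<exists>x\<in>{m. \<forall>i\<ge>n. m i = 0}. p = restrict x {..<n}"
    by (rule bexI[of _ "\<lambda>i. if i < n then p i else 0"])
       (use p in \<open>auto simp: fun_eq_iff restrict_def PiE_def extensional_def\<close>)
qed

lemma multi_has_sum:
  fixes bs xs :: "nat \<Rightarrow> real"
  assumes x: "\<And>i. i < n \<Longrightarrow> \<bar>xs i\<bar> < 1" and b: "\<And>i. i < n \<Longrightarrow> bs i > 0"
  shows "((\<lambda>m. \<Prod>i<n. ser (bs i) (xs i) (m i)) has_sum (\<Prod>i<n. (1 - xs i) powr (-bs i)))
            {m. \<forall>i\<ge>n. m i = 0}"
    and "(\<lambda>m. norm (\<Prod>i<n. ser (bs i) (xs i) (m i))) summable_on {m. \<forall>i\<ge>n. m i = 0}"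
proof -
  define f where "f i = ser (bs i) (xs i)" for i
  have fa: "(\<lambda>k. norm (f i k)) summable_on UNIV" if "i \<in> {..<n}" for i
    using ser_has_sum(2)[OF x b] that by (simp add: f_def)
  have fs: "(f i has_sum (1 - xs i) powr (-bs i)) UNIV" if "i \<in> {..<n}" for i
    using ser_has_sum(1)[OF x b] that by (simp add: f_def)
  have "Infinite_Set_Sum.abs_summable_on (\<lambda>g. \<Prod>x\<in>{..<n}. f x (g x)) (PiE {..<n} (\<lambda>_. UNIV))"
    by (rule abs_summable_on_prod_PiE) (auto intro!: abs_summable_equivalent[THEN iffD1] fa)
  then have A: "(\<lambda>g. norm (\<Prod>x\<in>{..<n}. f x (g x))) summable_on (PiE {..<n} (\<lambda>_. UNIV))"
    by (rule abs_summable_equivalent[THEN iffD2])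
  have "infsum (\<lambda>g. \<Prod>x\<in>{..<n}. f x (g x)) (PiE {..<n} (\<lambda>_. UNIV)) = (\<Prod>x\<in>{..<n}. infsum (f x) UNIV)"
    by (rule infsum_prod_PiE_abs) (use fa in auto)
  also have "\<dots> = (\<Prod>i<n. (1 - xs i) powr (-bs i))"
    using fs by (intro prod.cong) (auto intro: infsumI)
  finally have "((\<lambda>g. \<Prod>x\<in>{..<n}. f x (g x)) has_sum (\<Prod>i<n. (1 - xs i) powr (-bs i))) (PiE {..<n} (\<lambda>_. UNIV))"
    using abs_summable_summable[OF A] by (metis has_sum_infsum)
  then have H: "((\<lambda>m. \<Prod>x\<in>{..<n}. f x (restrict m {..<n} x)) has_sum (\<Prod>i<n. (1 - xs i) powr (-bs i))) {m. \<forall>i\<ge>n. m i = 0}"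
    by (rule has_sum_reindex_bij_betw[OF bij_restrict_idx, of "\<lambda>g. \<Prod>x\<in>{..<n}. f x (g x)", THEN iffD2])
  have eq: "(\<Prod>x\<in>{..<n}. f x (restrict m {..<n} x)) = (\<Prod>i<n. ser (bs i) (xs i) (m i))" for m
    by (intro prod.cong) (auto simp: f_def)
  show "((\<lambda>m. \<Prod>i<n. ser (bs i) (xs i) (m i)) has_sum (\<Prod>i<n. (1 - xs i) powr (-bs i))) {m. \<forall>i\<ge>n. m i = 0}"
    using H by (simp only: eq)
  from A obtain S where "((\<lambda>g. norm (\<Prod>x\<in>{..<n}. f x (g x))) has_sum S) (PiE {..<n} (\<lambda>_. UNIV))"
    by (auto simp: summable_on_def)
  then have "((\<lambda>m. norm (\<Prod>x\<in>{..<n}. f x (restrict m {..<n} x))) has_sum S) {m. \<forall>i\<ge>n. m i = 0}"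
    by (rule has_sum_reindex_bij_betw[OF bij_restrict_idx, of "\<lambda>g. norm (\<Prod>x\<in>{..<n}. f x (g x))", THEN iffD2])
  then show "(\<lambda>m. norm (\<Prod>i<n. ser (bs i) (xs i) (m i))) summable_on {m. \<forall>i\<ge>n. m i = 0}"
    by (simp only: eq summable_on_def) blast
qed

lemma integral_has_sum:
  fixes f :: "'a \<Rightarrow> real \<Rightarrow> real"
  assumes cont: "\<And>m. m \<in> M \<Longrightarrow> continuous_on {0..1} (f m)"
    and hs: "\<And>s. s \<in> {0..1} \<Longrightarrow> ((\<lambda>m. f m s) has_sum F s) M"
    and bnd: "\<And>m s. m \<in> M \<Longrightarrow> s \<in> {0..1} \<Longrightarrow> \<bar>f m s\<bar> \<le> B m"
    and Bs: "B summable_on M"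
    and vi: "\<And>m. m \<in> M \<Longrightarrow> (f m has_integral v m) {0..1}"
  shows "\<exists>J. (F has_integral J) {0..1} \<and> (v has_sum J) M"
proof -
  define G where "G X s = (\<Sum>m\<in>X\<inter>M. f m s)" for X s
  have unif: "uniform_limit {0..1} G F (finite_subsets_at_top M)"
    unfolding uniform_limit_iff
  proof (intro allI impI)
    fix e :: real assume e: "e > 0"
    have "(sum B \<longlongrightarrow> infsum B M) (finite_subsets_at_top M)"
      using Bs has_sum_def has_sum_infsum by blast
    then have ev1: "\<forall>\<^sub>F X in finite_subsets_at_top M. dist (sum B X) (infsum B M) < e"
      using e tendstoD by blast
    have ev2: "\<forall>\<^sub>F X in finite_subsets_at_top M. finite X \<and> X \<subseteq> M"
      by (rule eventually_finite_subsets_at_top_weakI) auto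
    show "\<forall>\<^sub>F X in finite_subsets_at_top M. \<forall>s\<in>{0..1}. dist (G X s) (F s) < e"
      using ev1 ev2
    proof eventually_elim
      case (elim X)
      then have XM: "X \<inter> M = X" by auto
      show ?case
      proof
        fix s :: real assume s: "s \<in> {0..1}"
        have gx: "((\<lambda>m. f m s) has_sum G X s) X"
          unfolding G_def XM using elim by simp
        have gs: "((\<lambda>m. if m \<in> X then f m s else 0) has_sum G X s) M"
          using has_sum_cong_neutral[of M X "\<lambda>m. if m \<in> X then f m s else 0" "\<lambda>m. f m s"] gx elim
          by auto
        have "((\<lambda>m. - (if m \<in> X then f m s else 0)) has_sum - G X s) M"
          using has_sum_uminus[where f="\<lambda>m. if m \<in> X then f m s else 0" and a="- G X s" and A=M] gs by simp
        from has_sum_add[OF hs[OF s] this]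
        have h1: "((\<lambda>m. f m s - (if m \<in> X then f m s else 0)) has_sum (F s - G X s)) M"
          by simp
        have bx: "(B has_sum sum B X) X" using elim by simp
        have bs: "((\<lambda>m. if m \<in> X then B m else 0) has_sum sum B X) M"
        proof -
          have "(B has_sum sum B X) X \<longleftrightarrow> ((\<lambda>m. if m \<in> X then B m else 0) has_sum sum B X) M"
            by (rule has_sum_cong_neutral) (use elim in auto)
          then show ?thesis using bx by blast
        qed
        have "((\<lambda>m. - (if m \<in> X then B m else 0)) has_sum - sum B X) M"
          using has_sum_uminus[where f="\<lambda>m. if m \<in> X then B m else 0" and a="- sum B X" and A=M] bs by simp
        from has_sum_add[OF has_sum_infsum[OF Bs] this]
        have h2: "((\<lambda>m. B m - (if m \<in> X then B m else 0)) has_sum (infsum B M - sum B X)) M"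
          by simp
        have "norm (F s - G X s) \<le> infsum B M - sum B X"
          by (rule norm_infsum_le[OF h1 h2]) (use bnd s in auto)
        then show "dist (G X s) (F s) < e"
          using elim by (simp add: dist_real_def)
      qed
    qed
  qed
  have contG: "continuous_on {0..1} (G X)" for X
    unfolding G_def by (intro continuous_on_sum) (use cont in auto)
  obtain I J where I: "\<And>X. (G X has_integral I X) {0..1}" and J: "(F has_integral J) {0..1}"
    and IJ: "(I \<longlongrightarrow> J) (finite_subsets_at_top M)"
    using uniform_limit_integral[OF unif contG finite_subsets_at_top_neq_bot] by blast
  have "\<forall>\<^sub>F X in finite_subsets_at_top M. I X = sum v X"
  proof (rule eventually_finite_subsets_at_top_weakI)
    fix X assume X: "finite X" "X \<subseteq> M"
    then have "X \<inter> M = X" by auto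
    then have "(G X has_integral sum v X) {0..1}"
      unfolding G_def using X by (simp only:) (intro has_integral_sum, auto intro: vi)
    then show "I X = sum v X" using I has_integral_unique by blast
  qed
  then have "(v has_sum J) M"
    unfolding has_sum_def using IJ tendsto_cong by blast
  then show ?thesis using J by blast
qed

lemma poch_shift: "pochhammer (a::real) k * (a + of_nat k) = a * pochhammer (a + 1) k"
  using pochhammer_rec[of a k] pochhammer_rec'[of a k] by (simp add: mult.commute)

lemma pow_integral: "((\<lambda>s. c * s ^ k) has_integral (c / (real k + 1))) {0..1::real}"
proof -
  have "((\<lambda>s::real. s ^ k) has_integral ((\<lambda>s. s ^ Suc k / real (Suc k)) 1 - (\<lambda>s. s ^ Suc k / real (Suc k)) 0)) {0..1}"
  proof (rule fundamental_theorem_of_calculus)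
    fix x :: real assume "x \<in> {0..1}"
    have "((\<lambda>s. s ^ Suc k / real (Suc k)) has_real_derivative x ^ k) (at x within {0..1})"
      by (rule derivative_eq_intros refl | simp)+
    then show "((\<lambda>s. s ^ Suc k / real (Suc k)) has_vector_derivative x ^ k) (at x within {0..1})"
      by (simp add: has_real_derivative_iff_has_vector_derivative)
  qed simp
  then have "((\<lambda>s::real. s ^ k) has_integral (1 / (real k + 1))) {0..1}" by (simp add: add.commute)
  from has_integral_mult_right[OF this, of c] show ?thesis by simp
qed

lemma prod4: "(\<Prod>i<4::nat. f i) = f 0 * f 1 * f 2 * (f 3 :: real)"
  by (simp add: eval_nat_numeral)

lemma ratio1: "pochhammer (1/2::real) k / pochhammer (3/2) k = 1 / (2 * real k + 1)"
proof -
  have "pochhammer (1/2::real) k * (1/2 + real k) = 1/2 * pochhammer (3/2) k"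
    using poch_shift[of "1/2" k] by simp
  moreover have "pochhammer (3/2::real) k > 0" by (rule pochhammer_pos) simp
  ultimately show ?thesis by (simp add: field_simps)
qed

lemma ratio2: "pochhammer (3/2::real) k / pochhammer (5/2) k = 3 / (2 * real k + 3)"
proof -
  have "pochhammer (3/2::real) k * (3/2 + real k) = 3/2 * pochhammer (5/2) k"
    using poch_shift[of "3/2" k] by simp
  moreover have "pochhammer (5/2::real) k > 0" by (rule pochhammer_pos) simp
  ultimately show ?thesis by (simp add: field_simps)
qed

lemma term_eq:
  fixes bs xs :: "nat \<Rightarrow> real"
  shows "p * (\<Prod>i<n. pochhammer (bs i) (m i)) / (q * (\<Prod>i<n. fact (m i))) * (\<Prod>i<n. xs i ^ m i)
     = (\<Prod>i<n. ser (bs i) (xs i) (m i)) * (p / q)"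
  by (simp add: ser_def prod.distrib prod_dividef ac_simps)

lemma ser_scale: "ser b (x * t) n = ser b x n * t ^ n"
  by (simp add: ser_def power_mult_distrib)

lemma alg_id:
  fixes s r S q3 q4 d1 d2 C N :: real
  assumes "s > 0" "r > 0" "S > 0" "q3 > 0" "q4 > 0" "d1 > 0" "d2 > 0" "C \<noteq> 0"
  shows "2 * r^2 * s * (N / (C * d1 * d2) / (S * (q3 * (q4 * (r * s))))) = 2 * r / (C * S) * (N * (1 / (d1 * d2 * q3 * q4)))"
  using assms by (simp add: field_simps power2_eq_square)

theorem mainTheorem1:
  fixes a b c y \<alpha> :: real
  assumes "0 < c" "c < y" "y < 1" "y < b" "b < a"
  shows "((\<lambda>u. (1 - \<alpha> * u) / (1 - u^2) / sqrt ((a - u) * (b - u) * (u - c)))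
          has_integral
          (sqrt (y - c) / ((1 - c^2) * sqrt ((a - c) * (b - c))) *
            (2 * (1 - c * \<alpha>) *
               lauricella_FD 4 (1/2) ((!) [1, 1, 1/2, 1/2]) (3/2)
                 ((!) [(y - c) / (1 - c), - (y - c) / (1 + c), - (y - c) / (c - a), - (y - c) / (c - b)])
             - 2/3 * \<alpha> * (y - c) *
               lauricella_FD 4 (3/2) ((!) [1, 1, 1/2, 1/2]) (5/2)
                 ((!) [(y - c) / (1 - c), - (y - c) / (1 + c), - (y - c) / (c - a), - (y - c) / (c - b)]))))
          {c..y}"
proof -
  note assms = assms
  define x1 where "x1 = (y - c) / (1 - c)"
  define x2 where "x2 = - (y - c) / (1 + c)"
  define x3 where "x3 = - (y - c) / (c - a)"
  define x4 where "x4 = - (y - c) / (c - b)"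
  define bs :: "nat \<Rightarrow> real" where "bs = (!) [1, 1, 1/2, 1/2]"
  define xs :: "nat \<Rightarrow> real" where "xs = (!) [x1, x2, x3, x4]"
  define idx where "idx = {m :: nat \<Rightarrow> nat. \<forall>i\<ge>4. m i = 0}"
  define K where "K m = (\<Sum>i<4. m i)" for m :: "nat \<Rightarrow> nat"
  define coef where "coef m = (\<Prod>i<4. ser (bs i) (xs i) (m i))" for m
  define P where "P s = (\<Prod>i<4. (1 - xs i * s\<^sup>2) powr (- bs i))" for s :: real
  define Pe where "Pe s = 1 / ((1 - x1 * s\<^sup>2) * (1 - x2 * s\<^sup>2) * sqrt (1 - x3 * s\<^sup>2) * sqrt (1 - x4 * s\<^sup>2))" for s :: real
  have x1: "0 < x1" "x1 < 1" using assms by (auto simp: x1_def field_simps)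
  have x2: "-1 < x2" "x2 < 0" using assms by (auto simp: x2_def field_simps)
  have x3: "0 < x3" "x3 < 1" using assms by (auto simp: x3_def field_simps)
  have x4: "0 < x4" "x4 < 1" using assms by (auto simp: x4_def field_simps)
  have i4: "i = 0 \<or> i = 1 \<or> i = 2 \<or> i = 3" if "i < 4" for i :: nat using that by auto
  have xsb: "\<bar>xs i * t\<bar> < 1" if "i < 4" "t \<in> {0..1}" for i t
  proof -
    have "\<bar>xs i\<bar> < 1" using i4[OF that(1)] x1 x2 x3 x4 by (auto simp: xs_def)
    moreover have "\<bar>t\<bar> \<le> 1" using that by auto
    ultimately have "\<bar>xs i\<bar> * \<bar>t\<bar> < 1"
      by (metis abs_ge_zero less_le_trans mult_left_le mult_less_cancel_right2 not_le)
    then show ?thesis by (simp add: abs_mult)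
  qed
  have bsp: "bs i > 0" if "i < 4" for i using i4[OF that] by (auto simp: bs_def)
  have s2: "s\<^sup>2 \<in> {0..1}" if "s \<in> {0..1}" for s :: real
    using that by (auto simp: power_le_one)
  have pos: "0 < 1 - xs i * s\<^sup>2" if "i < 4" "s \<in> {0..1}" for i s
    using xsb[OF that(1) s2[OF that(2)]] by linarith
  have PPe: "P s = Pe s" if s: "s \<in> {0..1}" for s
  proof -
    have p: "0 < 1 - x1 * s\<^sup>2" "0 < 1 - x2 * s\<^sup>2" "0 < 1 - x3 * s\<^sup>2" "0 < 1 - x4 * s\<^sup>2"
      using pos[OF _ s, of 0] pos[OF _ s, of 1] pos[OF _ s, of 2] pos[OF _ s, of 3]
      by (simp_all add: xs_def)
    have h: "t powr (-(1/2)) = 1 / sqrt t" if "t > 0" for t :: real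
      using that by (simp add: powr_minus_divide powr_half_sqrt)
    show ?thesis
      unfolding P_def Pe_def prod4 using p
      by (simp add: bs_def xs_def h powr_neg_one)
  qed
  have hs1: "((\<lambda>m. coef m * s ^ (2 * K m)) has_sum P s) idx" if s: "s \<in> {0..1}" for s
  proof -
    have "((\<lambda>m. \<Prod>i<4. ser (bs i) (xs i * s\<^sup>2) (m i)) has_sum (\<Prod>i<4. (1 - xs i * s\<^sup>2) powr (- bs i))) idx"
      unfolding idx_def by (rule multi_has_sum(1)) (use xsb[OF _ s2[OF s]] bsp in auto)
    moreover have "(\<Prod>i<4. ser (bs i) (xs i * s\<^sup>2) (m i)) = coef m * s ^ (2 * K m)" for m
      unfolding coef_def K_def ser_scale prod.distrib power_mult power_sum by simp
    ultimately show ?thesis unfolding P_def by simp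
  qed
  have cs: "(\<lambda>m. norm (coef m)) summable_on idx"
    unfolding idx_def coef_def
    by (rule multi_has_sum(2)) (use xsb[of _ 1] bsp in auto)
  have cs': "(\<lambda>m. \<bar>coef m\<bar>) summable_on idx" using cs by simp
  have bnd: "\<bar>coef m * s ^ k\<bar> \<le> \<bar>coef m\<bar>" if "s \<in> {0..1}" for m s k
  proof -
    have "\<bar>s\<bar> ^ k \<le> 1" using that by (auto intro: power_le_one)
    then show ?thesis by (simp add: abs_mult power_abs mult_left_le)
  qed
  have "\<exists>J. (P has_integral J) {0..1} \<and> ((\<lambda>m. coef m / (real (2 * K m) + 1)) has_sum J) idx"
  proof (rule integral_has_sum[where f="\<lambda>m s. coef m * s ^ (2 * K m)" and B="\<lambda>m. \<bar>coef m\<bar>"])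
    show "((\<lambda>m. coef m * s ^ (2 * K m)) has_sum P s) idx" if "s \<in> {0..1}" for s using hs1 that .
    show "((\<lambda>s. coef m * s ^ (2 * K m)) has_integral coef m / (real (2 * K m) + 1)) {0..1}" for m
      by (rule pow_integral)
    show "\<bar>coef m * s ^ (2 * K m)\<bar> \<le> \<bar>coef m\<bar>" if "s \<in> {0..1}" for m s
      using bnd that .
  qed (auto intro!: continuous_intros cs')
  then obtain J1 where J1: "(P has_integral J1) {0..1}" "((\<lambda>m. coef m / (real (2 * K m) + 1)) has_sum J1) idx"
    by blast
  have "\<exists>J. ((\<lambda>s. s\<^sup>2 * P s) has_integral J) {0..1} \<and> ((\<lambda>m. coef m / (real (2 * K m + 2) + 1)) has_sum J) idx"
  proof (rule integral_has_sum[where f="\<lambda>m s. coef m * s ^ (2 * K m + 2)" and B="\<lambda>m. \<bar>coef m\<bar>"])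
    show "((\<lambda>m. coef m * s ^ (2 * K m + 2)) has_sum s\<^sup>2 * P s) idx" if "s \<in> {0..1}" for s
    proof -
      have "((\<lambda>m. s\<^sup>2 * (coef m * s ^ (2 * K m))) has_sum s\<^sup>2 * P s) idx"
        by (rule has_sum_cmult_right) (rule hs1[OF that])
      moreover have "s\<^sup>2 * (coef m * s ^ (2 * K m)) = coef m * s ^ (2 * K m + 2)" for m
        by (simp add: power_add algebra_simps power2_eq_square)
      ultimately show ?thesis by simp
    qed
    show "((\<lambda>s. coef m * s ^ (2 * K m + 2)) has_integral coef m / (real (2 * K m + 2) + 1)) {0..1}" for m
      by (rule pow_integral)
    show "\<bar>coef m * s ^ (2 * K m + 2)\<bar> \<le> \<bar>coef m\<bar>" if "s \<in> {0..1}" for m s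
      using bnd that .
  qed (auto intro!: continuous_intros cs')
  then obtain J2 where J2: "((\<lambda>s. s\<^sup>2 * P s) has_integral J2) {0..1}" "((\<lambda>m. coef m / (real (2 * K m + 2) + 1)) has_sum J2) idx"
    by blast
  have L1: "lauricella_FD 4 (1/2) bs (3/2) xs = J1"
  proof -
    have "lauricella_FD 4 (1/2) bs (3/2) xs = infsum (\<lambda>m. coef m / (real (2 * K m) + 1)) idx"
      unfolding lauricella_FD_def idx_def[symmetric]
    proof (rule infsum_cong)
      fix m
      show "pochhammer (1/2) (\<Sum>i<4. m i) * (\<Prod>i<4. pochhammer (bs i) (m i)) /
          (pochhammer (3/2) (\<Sum>i<4. m i) * (\<Prod>i<4. fact (m i))) * (\<Prod>i<4. xs i ^ m i) =
          coef m / (real (2 * K m) + 1)"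
        unfolding term_eq ratio1 coef_def K_def by simp
    qed
    also have "\<dots> = J1" using J1(2) by (rule infsumI)
    finally show ?thesis .
  qed
  have L2: "lauricella_FD 4 (3/2) bs (5/2) xs = 3 * J2"
  proof -
    have "lauricella_FD 4 (3/2) bs (5/2) xs = infsum (\<lambda>m. 3 * (coef m / (real (2 * K m + 2) + 1))) idx"
      unfolding lauricella_FD_def idx_def[symmetric]
    proof (rule infsum_cong)
      fix m
      show "pochhammer (3/2) (\<Sum>i<4. m i) * (\<Prod>i<4. pochhammer (bs i) (m i)) /
          (pochhammer (5/2) (\<Sum>i<4. m i) * (\<Prod>i<4. fact (m i))) * (\<Prod>i<4. xs i ^ m i) =
          3 * (coef m / (real (2 * K m + 2) + 1))"
        unfolding term_eq ratio2 coef_def K_def by (simp add: field_simps)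
    qed
    also have "\<dots> = 3 * J2" using has_sum_cmult_right[OF J2(2), of 3] by (rule infsumI)
    finally show ?thesis .
  qed
  define T where "T u = (1 - \<alpha> * u) / (1 - u^2) / sqrt ((a - u) * (b - u) * (u - c))" for u
  define Kc where "Kc = 2 * sqrt (y - c) / ((1 - c^2) * sqrt ((a - c) * (b - c)))"
  define Qe where "Qe s = Kc * ((1 - c * \<alpha>) * Pe s - \<alpha> * (y - c) * (s\<^sup>2 * Pe s))" for s
  define V where "V = Kc * ((1 - c * \<alpha>) * J1 - \<alpha> * (y - c) * J2)"
  define g where "g s = c + (y - c) * s\<^sup>2" for s :: real
  define g' where "g' s = 2 * (y - c) * s" for s :: real
  have pp: "0 < 1 - x1 * s\<^sup>2" "0 < 1 - x2 * s\<^sup>2" "0 < 1 - x3 * s\<^sup>2" "0 < 1 - x4 * s\<^sup>2"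
    if s: "s \<in> {0..1}" for s
    using pos[OF _ s, of 0] pos[OF _ s, of 1] pos[OF _ s, of 2] pos[OF _ s, of 3]
    by (simp_all add: xs_def)
  have QV: "(Qe has_integral V) {0..1}"
  proof -
    have "((\<lambda>s. Kc * ((1 - c * \<alpha>) * P s - \<alpha> * (y - c) * (s\<^sup>2 * P s))) has_integral V) {0..1}"
      unfolding V_def
      by (intro has_integral_mult_right has_integral_diff J1(1) J2(1))
    then show ?thesis
      by (rule has_integral_cong[THEN iffD1, rotated]) (simp add: Qe_def PPe)
  qed
  have Qc: "continuous_on {0..1} Qe"
    unfolding Qe_def Pe_def
    by (intro continuous_intros) (auto dest: pp)
  have Qa: "Qe absolutely_integrable_on {0..1}"
    by (rule absolutely_integrable_continuous_real[OF Qc])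
  have pw: "\<bar>g' s\<bar> * T (g s) = Qe s" if s: "s \<in> {0..1} - {0}" for s
  proof -
    have s0: "s > 0" "s \<in> {0..1}" using s by auto
    note p = pp[OF s0(2)]
    define u where "u = g s"
    have c1: "1 - c \<noteq> 0" "1 + c \<noteq> 0" "c - a \<noteq> 0" "c - b \<noteq> 0" using assms by auto
    have e1: "1 - u^2 = (1 - c^2) * (1 - x1 * s\<^sup>2) * (1 - x2 * s\<^sup>2)"
    proof -
      have "(1 - c) * (1 - x1 * s\<^sup>2) = 1 - u" unfolding u_def g_def x1_def using c1 by (simp add: field_simps)
      moreover have "(1 + c) * (1 - x2 * s\<^sup>2) = 1 + u" unfolding u_def g_def x2_def using c1 by (simp add: field_simps)
      moreover have "1 - u^2 = (1 - u) * (1 + u)" "1 - c^2 = (1 - c) * (1 + c)" by (simp_all add: power2_eq_square algebra_simps)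
      ultimately show ?thesis by (metis mult.assoc mult.commute mult.left_commute)
    qed
    have e2: "(a - u) * (b - u) * (u - c) = ((a - c) * (b - c)) * ((1 - x3 * s\<^sup>2) * ((1 - x4 * s\<^sup>2) * ((y - c) * s\<^sup>2)))"
    proof -
      have "(a - c) * (1 - x3 * s\<^sup>2) = a - u" unfolding u_def g_def x3_def using c1 by (simp add: field_simps)
      moreover have "(b - c) * (1 - x4 * s\<^sup>2) = b - u" unfolding u_def g_def x4_def using c1 by (simp add: field_simps)
      moreover have "u - c = (y - c) * s\<^sup>2" unfolding u_def g_def by simp
      ultimately show ?thesis by (metis mult.assoc mult.commute mult.left_commute)
    qed
    have e3: "sqrt ((a - u) * (b - u) * (u - c)) = sqrt ((a - c) * (b - c)) * (sqrt (1 - x3 * s\<^sup>2) * (sqrt (1 - x4 * s\<^sup>2) * (sqrt (y - c) * s)))"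
      unfolding e2 real_sqrt_mult using s0 by simp
    have e4: "1 - \<alpha> * u = (1 - c * \<alpha>) - \<alpha> * (y - c) * s\<^sup>2"
      unfolding u_def g_def by (simp add: algebra_simps)
    define r where "r = sqrt (y - c)"
    have r: "r > 0" "y - c = r^2" using assms by (auto simp: r_def)
    define S where "S = sqrt ((a - c) * (b - c))"
    have S: "S > 0" using assms by (auto simp: S_def)
    have q: "sqrt (1 - x3 * s\<^sup>2) > 0" "sqrt (1 - x4 * s\<^sup>2) > 0" using p by auto
    have "c * c < 1 * 1" using assms by (intro mult_strict_mono) auto
    then have C: "1 - c^2 \<noteq> 0" by (simp add: power2_eq_square)
    have gs: "\<bar>g' s\<bar> = 2 * r^2 * s" using s0 r assms by (simp add: g'_def)
    define N where "N = (1 - c * \<alpha>) - \<alpha> * (y - c) * s\<^sup>2"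
    define d1 where "d1 = 1 - x1 * s\<^sup>2"
    define d2 where "d2 = 1 - x2 * s\<^sup>2"
    define q3 where "q3 = sqrt (1 - x3 * s\<^sup>2)"
    define q4 where "q4 = sqrt (1 - x4 * s\<^sup>2)"
    have lhs: "\<bar>g' s\<bar> * T (g s) = 2 * r^2 * s * (N / ((1 - c^2) * d1 * d2) / (S * (q3 * (q4 * (r * s)))))"
      unfolding gs T_def u_def[symmetric] e1 e3 e4 N_def d1_def d2_def q3_def q4_def r_def S_def ..
    have rhs: "Qe s = 2 * r / ((1 - c^2) * S) * (N * (1 / (d1 * d2 * q3 * q4)))"
    proof -
      have "Qe s = Kc * (N * Pe s)" unfolding Qe_def N_def by (simp add: algebra_simps)
      moreover have "Kc = 2 * r / ((1 - c^2) * S)" unfolding Kc_def r_def S_def ..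
      moreover have "Pe s = 1 / (d1 * d2 * q3 * q4)" unfolding Pe_def d1_def d2_def q3_def q4_def ..
      ultimately show ?thesis by simp
    qed
    have "d1 > 0" "d2 > 0" using p by (auto simp: d1_def d2_def)
    then show ?thesis unfolding lhs rhs
      using q C S r(1) s0(1) unfolding q3_def[symmetric] q4_def[symmetric]
      by (intro alg_id) auto
  qed
  have gS: "g ` {0..1} = {c..y}"
  proof
    show "g ` {0..1} \<subseteq> {c..y}"
    proof
      fix u assume "u \<in> g ` {0..1}"
      then obtain s where s: "s \<in> {0..1}" "u = g s" by auto
      have "s\<^sup>2 \<le> 1" using s by (auto simp: power_le_one)
      then have h1: "(y - c) * s\<^sup>2 \<le> (y - c)" using assms by (simp add: mult_left_le)
      have h2: "0 \<le> (y - c) * s\<^sup>2" using assms by simp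
      have hu: "u = c + (y - c) * s\<^sup>2" using s by (simp add: g_def)
      show "u \<in> {c..y}" by (simp only: atLeastAtMost_iff hu) (use h1 h2 in linarith)
    qed
    show "{c..y} \<subseteq> g ` {0..1}"
    proof
      fix u assume u: "u \<in> {c..y}"
      define s where "s = sqrt ((u - c) / (y - c))"
      have "s \<in> {0..1}" using u assms by (auto simp: s_def)
      moreover have "g s = u" using u assms by (simp add: g_def s_def)
      ultimately show "u \<in> g ` {0..1}" by (metis imageI)
    qed
  qed
  have cov: "(\<lambda>x. \<bar>g' x\<bar> * T (g x)) absolutely_integrable_on {0..1} \<and>
           integral {0..1} (\<lambda>x. \<bar>g' x\<bar> * T (g x)) = V
     \<longleftrightarrow> T absolutely_integrable_on (g ` {0..1}) \<and> integral (g ` {0..1}) T = V"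
  proof (rule has_absolute_integral_change_of_variables_1')
    show "(g has_field_derivative g' x) (at x within {0..1})" for x
      unfolding g_def g'_def by (rule derivative_eq_intros refl | simp)+
    show "inj_on g {0..1}"
    proof (rule inj_onI)
      fix s1 s2 :: real assume "s1 \<in> {0..1}" "s2 \<in> {0..1}" "g s1 = g s2"
      then have "s1\<^sup>2 = s2\<^sup>2" "0 \<le> s1" "0 \<le> s2" using assms by (auto simp: g_def)
      then show "s1 = s2" by (simp add: power2_eq_iff_nonneg)
    qed
  qed simp
  have "(\<lambda>x. \<bar>g' x\<bar> * T (g x)) absolutely_integrable_on {0..1}"
    by (rule absolutely_integrable_spike[OF Qa negligible_sing]) (use pw in auto)
  moreover have "integral {0..1} (\<lambda>x. \<bar>g' x\<bar> * T (g x)) = V"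
    using integral_spike[OF negligible_sing[of 0], where T="{0..1}" and g="\<lambda>x. \<bar>g' x\<bar> * T (g x)" and f=Qe] pw
      integral_unique[OF QV] by auto
  ultimately have "T absolutely_integrable_on {c..y} \<and> integral {c..y} T = V"
    using cov gS by simp
  then have TV: "(T has_integral V) {c..y}"
    using absolutely_integrable_on_def integrable_integral by metis
  have eqs: "(!) [1, 1, 1/2, 1/2] = bs"
     "(!) [(y - c) / (1 - c), - (y - c) / (1 + c), - (y - c) / (c - a), - (y - c) / (c - b)] = xs"
    by (simp_all add: bs_def xs_def x1_def x2_def x3_def x4_def)
  have "V = sqrt (y - c) / ((1 - c^2) * sqrt ((a - c) * (b - c))) *
            (2 * (1 - c * \<alpha>) * J1 - 2/3 * \<alpha> * (y - c) * (3 * J2))"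
  proof -
    define D where "D = sqrt (y - c) / ((1 - c^2) * sqrt ((a - c) * (b - c)))"
    have "Kc = 2 * D" unfolding Kc_def D_def by simp
    then show ?thesis unfolding V_def D_def[symmetric] by (simp add: algebra_simps add_divide_distrib diff_divide_distrib)
  qed
  then show ?thesis
    unfolding eqs L1 L2 using TV unfolding T_def by simp
qed

end
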